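(* Let $R$ be a semisimple commutative ring, $M$ an $R$-module and $C$ an $R$-linear relation on $M$. The following are equivalent: (1) there exists a reduction $(X\mid\rho)$ of $(M,C)$ that meets in the radical; (2) $C^\sharp=C^\flat\oplus Y$ for some $R$-submodule $Y$ carrying an $R[T,T^{-1}]$-module structure (extending its $R$-module structure) such that, for $y,z\in Y$, $Ty=z$ if and only if $z\in Cy$.
   Context: An $R$-linear relation on $M$ is an $R$-submodule $C\subseteq M\oplus M$; $Cm=\{m':(m,m')\in C\}$, $C^{-1}=\{(y,x):(x,y)\in C\}$. $C''$ is the set of $m\in M$ for which there is $(m_n)_{n\in\mathbb{N}}$ in $M$ with $m_0=m$ and $m_{n+1}\in Cm_n$ for all $n$; $C'$ is the set of those $m$ for which such a sequence exists with $m_n=0$ for $n\gg0$; $C^\sharp=C''\cap(C^{-1})''$; $C^\flat=C''\cap(C^{-1})'+(C^{-1})''\cap C'$. A reduction of $(M,C)$ is a pair $(X\mid\rho)$ with $X$ an $R[T,T^{-1}]$-module and $\rho\colon X\to M$ $R$-linear such that $C^\sharp=C^\flat+\mathrm{im}(\rho)$ and $\rho(Tx)\in C\rho(x)$ for all $x\in X$; it meets in the radical if $\{x\in X:\rho(x)\in C^\flat\}=\mathrm{rad}(X)$, the radical of $X$ as an $R$-module. *)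

theory Defs
  imports Complex_Main
begin

text \<open>R is semisimple: R is a semisimple module over itself, i.e. every
submodule (= ideal) of R is a direct summand of R.\<close>
definition semisimple_ring :: "'r::comm_ring_1 itself \<Rightarrow> bool" where
  "semisimple_ring TYPE('r) \<longleftrightarrow>
     (\<forall>I::'r set. module.subspace (*) I \<longrightarrow>
        (\<exists>J. module.subspace (*) J \<and> I \<inter> J = {0} \<and> (\<forall>r. \<exists>a\<in>I. \<exists>b\<in>J. r = a + b)))"

definition module_on :: "('r::comm_ring_1 \<Rightarrow> 'x::ab_group_add \<Rightarrow> 'x) \<Rightarrow> 'x set \<Rightarrow> bool" where
  "module_on sc X \<longleftrightarrow>
     0 \<in> X \<and> (\<forall>x\<in>X. \<forall>y\<in>X. x + y \<in> X) \<and> (\<forall>x\<in>X. - x \<in> X) \<and> (\<forall>c. \<forall>x\<in>X. sc c x \<in> X) \<and>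
     (\<forall>a. \<forall>x\<in>X. \<forall>y\<in>X. sc a (x + y) = sc a x + sc a y) \<and>
     (\<forall>a b. \<forall>x\<in>X. sc (a + b) x = sc a x + sc b x) \<and>
     (\<forall>a b. \<forall>x\<in>X. sc a (sc b x) = sc (a * b) x) \<and>
     (\<forall>x\<in>X. sc 1 x = x)"

definition submodule_on :: "('r::comm_ring_1 \<Rightarrow> 'x::ab_group_add \<Rightarrow> 'x) \<Rightarrow> 'x set \<Rightarrow> 'x set \<Rightarrow> bool" where
  "submodule_on sc X N \<longleftrightarrow>
     N \<subseteq> X \<and> 0 \<in> N \<and> (\<forall>x\<in>N. \<forall>y\<in>N. x + y \<in> N) \<and> (\<forall>c. \<forall>x\<in>N. sc c x \<in> N)"

definition maximal_submodule_on :: "('r::comm_ring_1 \<Rightarrow> 'x::ab_group_add \<Rightarrow> 'x) \<Rightarrow> 'x set \<Rightarrow> 'x set \<Rightarrow> bool" where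
  "maximal_submodule_on sc X N \<longleftrightarrow>
     submodule_on sc X N \<and> N \<noteq> X \<and>
     (\<forall>N'. submodule_on sc X N' \<and> N \<subseteq> N' \<longrightarrow> N' = N \<or> N' = X)"

text \<open>Radical of X as an R-module: intersection of all maximal submodules
(equal to X if there are none).\<close>
definition module_rad :: "('r::comm_ring_1 \<Rightarrow> 'x::ab_group_add \<Rightarrow> 'x) \<Rightarrow> 'x set \<Rightarrow> 'x set" where
  "module_rad sc X = X \<inter> \<Inter>{N. maximal_submodule_on sc X N}"

definition linear_on :: "('r::comm_ring_1 \<Rightarrow> 'x::ab_group_add \<Rightarrow> 'x) \<Rightarrow> ('r \<Rightarrow> 'm::ab_group_add \<Rightarrow> 'm)
     \<Rightarrow> 'x set \<Rightarrow> ('x \<Rightarrow> 'm) \<Rightarrow> bool" where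
  "linear_on scX scM X f \<longleftrightarrow>
     (\<forall>x\<in>X. \<forall>y\<in>X. f (x + y) = f x + f y) \<and> (\<forall>c. \<forall>x\<in>X. f (scX c x) = scM c (f x))"

text \<open>An R[T,T^-1]-module structure on the R-module X (extending its R-module
structure): an R-linear automorphism T of X.\<close>
definition laurent_structure_on :: "('r::comm_ring_1 \<Rightarrow> 'x::ab_group_add \<Rightarrow> 'x) \<Rightarrow> 'x set \<Rightarrow> ('x \<Rightarrow> 'x) \<Rightarrow> bool" where
  "laurent_structure_on sc X T \<longleftrightarrow> linear_on sc sc X T \<and> bij_betw T X X"

definition linear_relation :: "('r::comm_ring_1 \<Rightarrow> 'm::ab_group_add \<Rightarrow> 'm) \<Rightarrow> ('m \<times> 'm) set \<Rightarrow> bool" where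
  "linear_relation sc C \<longleftrightarrow>
     (0, 0) \<in> C \<and> (\<forall>p\<in>C. \<forall>q\<in>C. (fst p + fst q, snd p + snd q) \<in> C) \<and>
     (\<forall>c. \<forall>p\<in>C. (sc c (fst p), sc c (snd p)) \<in> C)"

definition rel_app :: "('m \<times> 'm) set \<Rightarrow> 'm \<Rightarrow> 'm set" where
  "rel_app C m = {m'. (m, m') \<in> C}"

definition rel_inv :: "('m \<times> 'm) set \<Rightarrow> ('m \<times> 'm) set" where
  "rel_inv C = {(y, x). (x, y) \<in> C}"

text \<open>C'' (infinite chains) and C' (chains eventually zero).\<close>
definition rel_dd :: "('m \<times> 'm) set \<Rightarrow> 'm set" where
  "rel_dd C = {m. \<exists>f::nat \<Rightarrow> 'm. f 0 = m \<and> (\<forall>n. f (Suc n) \<in> rel_app C (f n))}"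

definition rel_d :: "('m::zero \<times> 'm) set \<Rightarrow> 'm set" where
  "rel_d C = {m. \<exists>f::nat \<Rightarrow> 'm. f 0 = m \<and> (\<forall>n. f (Suc n) \<in> rel_app C (f n)) \<and>
                     (\<exists>N. \<forall>n\<ge>N. f n = 0)}"

definition rel_sharp :: "('m \<times> 'm) set \<Rightarrow> 'm set" where
  "rel_sharp C = rel_dd C \<inter> rel_dd (rel_inv C)"

definition set_plus :: "'m::plus set \<Rightarrow> 'm set \<Rightarrow> 'm set" where
  "set_plus A B = {a + b | a b. a \<in> A \<and> b \<in> B}"

definition rel_flat :: "('m::monoid_add \<times> 'm) set \<Rightarrow> 'm set" where
  "rel_flat C = set_plus (rel_dd C \<inter> rel_d (rel_inv C)) (rel_dd (rel_inv C) \<inter> rel_d C)"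

definition is_reduction ::
  "('r::comm_ring_1 \<Rightarrow> 'm::ab_group_add \<Rightarrow> 'm) \<Rightarrow> ('m \<times> 'm) set \<Rightarrow>
   ('r \<Rightarrow> 'x::ab_group_add \<Rightarrow> 'x) \<Rightarrow> 'x set \<Rightarrow> ('x \<Rightarrow> 'x) \<Rightarrow> ('x \<Rightarrow> 'm) \<Rightarrow> bool" where
  "is_reduction scM C scX X TX \<rho> \<longleftrightarrow>
     module_on scX X \<and> laurent_structure_on scX X TX \<and> linear_on scX scM X \<rho> \<and>
     rel_sharp C = set_plus (rel_flat C) (\<rho> ` X) \<and>
     (\<forall>x\<in>X. \<rho> (TX x) \<in> rel_app C (\<rho> x))"

definition meets_in_radical ::
  "('m::ab_group_add \<times> 'm) set \<Rightarrow> ('r::comm_ring_1 \<Rightarrow> 'x::ab_group_add \<Rightarrow> 'x) \<Rightarrow> 'x set \<Rightarrow> ('x \<Rightarrow> 'm) \<Rightarrow> bool" where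
  "meets_in_radical C scX X \<rho> \<longleftrightarrow> {x\<in>X. \<rho> x \<in> rel_flat C} = module_rad scX X"

end

theory Submission
  imports Defs
begin

lemma module_mult: "module ((*) :: 'r::comm_ring_1 \<Rightarrow> 'r \<Rightarrow> 'r)"
  by unfold_locales (auto simp: algebra_simps)

lemma vn_regular:
  fixes r :: "'r::comm_ring_1"
  assumes "semisimple_ring TYPE('r)"
  shows "\<exists>s. r * s * r = r"
proof -
  let ?I = "range (\<lambda>t. t * r)"
  have sub: "module.subspace (*) ?I"
  proof (rule module.subspaceI[OF module_mult])
    show "0 \<in> ?I" by (metis mult_zero_left rangeI)
  next
    show "x + y \<in> ?I" if h: "x \<in> ?I" "y \<in> ?I" for x y
    proof -
      obtain a b where "x = a * r" "y = b * r" using h by blast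
      then have "x + y = (a + b) * r" by (simp add: distrib_right)
      then show ?thesis by blast
    qed
  next
    show "c * x \<in> ?I" if h: "x \<in> ?I" for c x
    proof -
      obtain a where "x = a * r" using h by blast
      then have "c * x = (c * a) * r" by (simp add: mult.assoc)
      then show ?thesis by blast
    qed
  qed
  have "\<forall>I::'r set. module.subspace (*) I \<longrightarrow>
        (\<exists>J. module.subspace (*) J \<and> I \<inter> J = {0} \<and> (\<forall>r. \<exists>a\<in>I. \<exists>b\<in>J. r = a + b))"
    using assms unfolding semisimple_ring_def .
  then have "\<exists>J. module.subspace (*) J \<and> ?I \<inter> J = {0} \<and> (\<forall>r. \<exists>a\<in>?I. \<exists>b\<in>J. r = a + b)"
    using sub by (elim allE[of _ ?I]) (erule mp)
  then obtain J where J: "module.subspace (*) J" "?I \<inter> J = {0}" "\<forall>r. \<exists>a\<in>?I. \<exists>b\<in>J. r = a + b"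
    by (elim exE conjE)
  obtain a b where ab: "a \<in> ?I" "b \<in> J" "1 = a + b" using J(3) by blast
  have "r * b \<in> J" using J(1) ab(2) unfolding module.subspace_def[OF module_mult] by blast
  moreover have "r * b \<in> ?I" by (metis mult.commute rangeI)
  ultimately have "r * b = 0" using J(2) by blast
  moreover obtain s where "a = s * r" using ab(1) by blast
  moreover have "r = r * a + r * b" using ab(3) by (metis distrib_left mult.right_neutral)
  ultimately have "r = r * (s * r)" by simp
  then have "r * s * r = r" by (simp add: mult.assoc)
  then show ?thesis by blast
qed

context
  fixes sc :: "'r::comm_ring_1 \<Rightarrow> 'x::ab_group_add \<Rightarrow> 'x" and X :: "'x set"
  assumes mo: "module_on sc X"
begin

lemma mo_zero: "0 \<in> X" and mo_add: "x \<in> X \<Longrightarrow> y \<in> X \<Longrightarrow> x + y \<in> X"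
  and mo_neg: "x \<in> X \<Longrightarrow> - x \<in> X" and mo_sc: "x \<in> X \<Longrightarrow> sc c x \<in> X"
  and mo_radd: "x \<in> X \<Longrightarrow> y \<in> X \<Longrightarrow> sc a (x + y) = sc a x + sc a y"
  and mo_ladd: "x \<in> X \<Longrightarrow> sc (a + b) x = sc a x + sc b x"
  and mo_mult: "x \<in> X \<Longrightarrow> sc a (sc b x) = sc (a * b) x"
  and mo_one: "x \<in> X \<Longrightarrow> sc 1 x = x"
  using mo unfolding module_on_def by auto

lemma mo_diff: "x \<in> X \<Longrightarrow> y \<in> X \<Longrightarrow> x - y \<in> X"
  using mo_add mo_neg by (metis diff_conv_add_uminus)

lemma mo_sc0: "x \<in> X \<Longrightarrow> sc 0 x = 0"
  using mo_ladd[of x 0 0] by simp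

lemma mo_sc_zero: "sc a 0 = 0"
  using mo_mult[OF mo_zero, of a 0] mo_sc0[OF mo_zero] by simp

lemma mo_lneg: "x \<in> X \<Longrightarrow> sc (- a) x = - sc a x"
  using mo_ladd[of x "-a" a] mo_sc0[of x] by (simp add: eq_neg_iff_add_eq_0)

lemma mo_ldiff: "x \<in> X \<Longrightarrow> sc (a - b) x = sc a x - sc b x"
  using mo_ladd[of x a "-b"] mo_lneg[of x b] by simp

lemma mo_rneg: "x \<in> X \<Longrightarrow> sc a (- x) = - sc a x"
  using mo_radd[of "-x" x a] mo_neg[of x] mo_sc_zero[of a] by (simp add: eq_neg_iff_add_eq_0)

lemma mo_rdiff: "x \<in> X \<Longrightarrow> y \<in> X \<Longrightarrow> sc a (x - y) = sc a x - sc a y"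
  using mo_radd[of x "-y" a] mo_rneg[of y a] mo_neg[of y] by simp

lemma sub_neg: "submodule_on sc X N \<Longrightarrow> x \<in> N \<Longrightarrow> - x \<in> N"
  unfolding submodule_on_def using mo_lneg[of x 1] mo_one[of x] by (metis subsetD)

lemma sub_diff: "submodule_on sc X N \<Longrightarrow> x \<in> N \<Longrightarrow> y \<in> N \<Longrightarrow> x - y \<in> N"
  using sub_neg[of N y] unfolding submodule_on_def by (metis diff_conv_add_uminus)

lemma rad_avoid:
  assumes ss: "semisimple_ring TYPE('r)" and yX: "y \<in> X" and y0: "y \<noteq> 0"
  shows "\<exists>N. maximal_submodule_on sc X N \<and> y \<notin> N"
proof -
  define A where "A = {N. submodule_on sc X N \<and> y \<notin> N}"
  have "\<exists>U\<in>A. \<forall>S\<in>Ch. S \<subseteq> U" if ch: "Ch \<in> chains A" for Ch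
  proof (cases "Ch = {}")
    case True
    have "{0} \<in> A" unfolding A_def submodule_on_def using y0 mo_zero mo_sc_zero by auto
    then show ?thesis using True by blast
  next
    case False
    have sub: "Ch \<subseteq> A" and cmp: "\<And>S T. S \<in> Ch \<Longrightarrow> T \<in> Ch \<Longrightarrow> S \<subseteq> T \<or> T \<subseteq> S"
      using ch unfolding chains_def chain_subset_def by auto
    have "\<Union>Ch \<in> A" unfolding A_def submodule_on_def
    proof (intro CollectI conjI ballI allI)
      show "\<Union>Ch \<subseteq> X" using sub unfolding A_def submodule_on_def by blast
      show "0 \<in> \<Union>Ch" using sub False unfolding A_def submodule_on_def by blast
      show "y \<notin> \<Union>Ch" using sub unfolding A_def by blast
      show "sc c x \<in> \<Union>Ch" if "x \<in> \<Union>Ch" for c x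
        using sub that unfolding A_def submodule_on_def by blast
      show "x + z \<in> \<Union>Ch" if xz: "x \<in> \<Union>Ch" "z \<in> \<Union>Ch" for x z
      proof -
        obtain S T where ST: "S \<in> Ch" "T \<in> Ch" "x \<in> S" "z \<in> T" using xz by blast
        show ?thesis
        proof (cases "S \<subseteq> T")
          case True
          then have "T \<in> A" "x \<in> T" using ST sub by auto
          then show ?thesis using ST unfolding A_def submodule_on_def by blast
        next
          case False
          then have "T \<subseteq> S" using cmp ST by blast
          then have "S \<in> A" "z \<in> S" using ST sub by auto
          then show ?thesis using ST unfolding A_def submodule_on_def by blast
        qed
      qed
    qed
    then show ?thesis by blast
  qed
  then have "\<forall>Ch\<in>chains A. \<exists>U\<in>A. \<forall>S\<in>Ch. S \<subseteq> U" by (rule ballI)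
  from Zorn_Lemma2[OF this] obtain N where NA: "N \<in> A" and Nmax0: "\<forall>S\<in>A. N \<subseteq> S \<longrightarrow> S = N"
    by (elim bexE)
  have Nmax: "\<And>S. S \<in> A \<Longrightarrow> N \<subseteq> S \<Longrightarrow> S = N" using Nmax0 by blast
  have Nsub: "submodule_on sc X N" and yN: "y \<notin> N" using NA unfolding A_def by auto
  have NX: "N \<subseteq> X" "0 \<in> N" "\<And>a b. a \<in> N \<Longrightarrow> b \<in> N \<Longrightarrow> a + b \<in> N" "\<And>c a. a \<in> N \<Longrightarrow> sc c a \<in> N"
    using Nsub unfolding submodule_on_def by auto
  have key: "y \<in> N'" if "submodule_on sc X N'" "N \<subseteq> N'" "N' \<noteq> N" for N'
    using Nmax[of N'] that unfolding A_def by blast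
  have span: "\<exists>n\<in>N. \<exists>r. y = n + sc r z" if zX: "z \<in> X" and zN: "z \<notin> N" for z
  proof -
    define N'' where "N'' = {n + sc r z | n r. n \<in> N}"
    have "submodule_on sc X N''" unfolding submodule_on_def
    proof (intro conjI ballI allI)
      show "N'' \<subseteq> X" unfolding N''_def using NX(1) zX mo_add mo_sc by blast
      show "0 \<in> N''" unfolding N''_def using NX(2) mo_sc0[OF zX] by force
      show "a + b \<in> N''" if ab: "a \<in> N''" "b \<in> N''" for a b
      proof -
        obtain n1 r1 n2 r2 where h: "a = n1 + sc r1 z" "b = n2 + sc r2 z" "n1 \<in> N" "n2 \<in> N"
          using ab unfolding N''_def by blast
        have "a + b = (n1 + n2) + sc (r1 + r2) z" using h mo_ladd[OF zX] by (simp add: algebra_simps)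
        then show ?thesis unfolding N''_def using NX(3) h by blast
      qed
      show "sc c a \<in> N''" if ab: "a \<in> N''" for c a
      proof -
        obtain n1 r1 where h: "a = n1 + sc r1 z" "n1 \<in> N" using ab unfolding N''_def by blast
        have "sc c a = sc c n1 + sc (c * r1) z" using h mo_radd[of n1 "sc r1 z" c] NX(1) zX mo_sc mo_mult
          by auto
        then show ?thesis unfolding N''_def using NX(4) h by blast
      qed
    qed
    moreover have "N \<subseteq> N''" unfolding N''_def
    proof
      fix n assume "n \<in> N" then show "n \<in> {n + sc r z |n r. n \<in> N}"
        using mo_sc0[OF zX] by (metis (mono_tags, lifting) CollectI add.right_neutral)
    qed
    moreover have "z \<in> N''"
    proof -
      have "z = 0 + sc 1 z" using mo_one[OF zX] by simp
      then show ?thesis unfolding N''_def using NX(2) by blast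
    qed
    ultimately have "y \<in> N''" using key zN by blast
    then show ?thesis unfolding N''_def by blast
  qed
  have "N' = X" if N': "submodule_on sc X N'" "N \<subseteq> N'" "N' \<noteq> N" for N'
  proof
    show "N' \<subseteq> X" using N' unfolding submodule_on_def by blast
    have yN': "y \<in> N'" using key N' by blast
    show "X \<subseteq> N'"
    proof
      fix z assume zX: "z \<in> X"
      show "z \<in> N'"
      proof (cases "z \<in> N")
        case True then show ?thesis using N' by blast
      next
        case False
        then obtain n r where n: "n \<in> N" and yr: "y = n + sc r z" using span zX by blast
        obtain s where s: "r * s * r = r" using vn_regular[OF ss] by blast
        define x where "x = z - sc (s * r) z"
        have xX: "x \<in> X" unfolding x_def using zX mo_sc mo_diff by blast
        have nX: "n \<in> X" using n NX(1) by blast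
        have xN: "x \<in> N"
        proof (rule ccontr)
          assume "x \<notin> N"
          then obtain n' u where n': "n' \<in> N" and yu: "y = n' + sc u x" using span xX by blast
          have "sc r x = sc r z - sc (r * (s * r)) z"
            unfolding x_def using mo_rdiff[of z "sc (s*r) z" r] zX mo_sc mo_mult by simp
          also have "\<dots> = 0" using s by (simp add: mult.assoc)
          finally have rx: "sc r x = 0" .
          have "sc r y = sc r n' + sc r (sc u x)" using yu mo_radd n' NX(1) xX mo_sc by blast
          also have "sc r (sc u x) = 0" using rx mo_mult[OF xX, of r u] mo_mult[OF xX, of u r] mo_sc_zero
            by (metis mult.commute)
          finally have ryN: "sc r y \<in> N" using NX(4) n' by simp
          have ymn: "y - n = sc r z" using yr by simp
          have "sc (r * s) (y - n) = sc (r * s) (sc r z)" using ymn by simp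
          also have "\<dots> = sc r z" using mo_mult[OF zX] s by simp
          finally have "y - n = sc (r * s) y - sc (r * s) n"
            using ymn mo_rdiff[OF yX nX] by simp
          then have "y = n + (sc s (sc r y) - sc (r * s) n)"
            using mo_mult[OF yX, of s r] by (simp add: algebra_simps)
          moreover have "sc s (sc r y) - sc (r * s) n \<in> N"
            using sub_diff[OF Nsub] NX(4) ryN n by blast
          ultimately have "y \<in> N" using NX(3) n by metis
          then show False using yN by blast
        qed
        have "z = x + sc (s * r) z" unfolding x_def by simp
        also have "sc (s * r) z = sc s (y - n)"
          using yr mo_mult[OF zX, of s r] by simp
        finally have "z = x + sc s (y - n)" .
        moreover have "y - n \<in> N'" using sub_diff[OF N'(1) yN'] n N'(2) by blast
        ultimately show ?thesis using N'(1) N'(2) xN unfolding submodule_on_def by (metis subsetD)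
      qed
    qed
  qed
  then have "maximal_submodule_on sc X N"
    unfolding maximal_submodule_on_def using Nsub yN yX by blast
  then show ?thesis using yN by blast
qed

lemma rad_sub_zero:
  assumes ss: "semisimple_ring TYPE('r)"
  shows "module_rad sc X \<subseteq> {0}"
  unfolding module_rad_def using rad_avoid[OF ss] by blast

lemma rad_eq_zero:
  assumes ss: "semisimple_ring TYPE('r)"
  shows "module_rad sc X = {0}"
proof -
  have "0 \<in> module_rad sc X" unfolding module_rad_def maximal_submodule_on_def submodule_on_def
    using mo_zero by blast
  then show ?thesis using rad_sub_zero[OF ss] by blast
qed

end

lemma module_on_sub:
  assumes m: "module scale" and Y: "module.subspace scale Y"
  shows "module_on scale Y"
proof -
  have Y': "0 \<in> Y" "\<And>x y. x \<in> Y \<Longrightarrow> y \<in> Y \<Longrightarrow> x + y \<in> Y" "\<And>c x. x \<in> Y \<Longrightarrow> scale c x \<in> Y"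
    using Y unfolding module.subspace_def[OF m] by auto
  have neg: "- x = scale (-1) x" for x using module.scale_minus_left[OF m, of 1 x] module.scale_one[OF m] by simp
  show ?thesis unfolding module_on_def
  proof (intro conjI ballI allI)
    show "0 \<in> Y" by (rule Y'(1))
    show "x + y \<in> Y" if "x \<in> Y" "y \<in> Y" for x y using Y'(2) that by blast
    show "- x \<in> Y" if "x \<in> Y" for x unfolding neg[of x] using Y'(3) that by blast
    show "scale c x \<in> Y" if "x \<in> Y" for c x using Y'(3) that by blast
    show "scale a (x + y) = scale a x + scale a y" for a x y by (rule module.scale_right_distrib[OF m])
    show "scale (a + b) x = scale a x + scale b x" for a b x by (rule module.scale_left_distrib[OF m])
    show "scale a (scale b x) = scale (a * b) x" for a b x by (rule module.scale_scale[OF m])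
    show "scale 1 x = x" for x by (rule module.scale_one[OF m])
  qed
qed

lemma zero_chain_dd: "(0, 0) \<in> D \<Longrightarrow> 0 \<in> rel_dd D"
  unfolding rel_dd_def rel_app_def by (rule CollectI, rule exI[of _ "\<lambda>n. 0"]) simp

lemma zero_chain_d: "(0, 0) \<in> D \<Longrightarrow> 0 \<in> rel_d D"
  unfolding rel_d_def rel_app_def by (rule CollectI, rule exI[of _ "\<lambda>n. 0"]) simp

lemma C0_flat:
  assumes C00: "(0, 0) \<in> C" and w: "(0, w) \<in> C" and wd: "w \<in> rel_dd C"
  shows "w \<in> rel_flat C"
proof -
  have i00: "(0, 0) \<in> rel_inv C" using C00 unfolding rel_inv_def by simp
  have "w \<in> rel_d (rel_inv C)" unfolding rel_d_def rel_app_def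
  proof (rule CollectI, rule exI[of _ "\<lambda>n. if n = 0 then w else 0"], intro conjI allI)
    fix n show "(if Suc n = 0 then w else 0) \<in> {m'. (if n = 0 then w else 0, m') \<in> rel_inv C}"
      using i00 w unfolding rel_inv_def by auto
  next
    show "\<exists>N::nat. \<forall>n\<ge>N. (if n = 0 then w else 0) = 0" by (rule exI[of _ "Suc 0"]) simp
  qed simp
  moreover have "0 \<in> rel_dd (rel_inv C) \<inter> rel_d C" using zero_chain_dd[OF i00] zero_chain_d[OF C00] by blast
  ultimately have "w + 0 \<in> rel_flat C" unfolding rel_flat_def set_plus_def using wd by blast
  then show ?thesis by simp
qed

lemma zero_flat:
  assumes C00: "(0, 0) \<in> C" shows "0 \<in> rel_flat C"
  using C0_flat[OF C00 C00 zero_chain_dd[OF C00]] .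

theorem proposition4p10:
  fixes scale :: "'r::comm_ring_1 \<Rightarrow> 'm::ab_group_add \<Rightarrow> 'm"
    and C :: "('m \<times> 'm) set"
  assumes "semisimple_ring TYPE('r)"
    and "module scale"
    and "linear_relation scale C"
  shows "((\<exists>(scX :: 'r \<Rightarrow> 'x::ab_group_add \<Rightarrow> 'x) X TX \<rho>.
              is_reduction scale C scX X TX \<rho> \<and> meets_in_radical C scX X \<rho>)
           \<longrightarrow> (\<exists>Y TY. module.subspace scale Y \<and> laurent_structure_on scale Y TY \<and>
                 (\<forall>y\<in>Y. \<forall>z\<in>Y. TY y = z \<longleftrightarrow> z \<in> rel_app C y) \<and>
                 rel_flat C \<inter> Y = {0} \<and> rel_sharp C = set_plus (rel_flat C) Y))
       \<and> ((\<exists>Y TY. module.subspace scale Y \<and> laurent_structure_on scale Y TY \<and>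
                 (\<forall>y\<in>Y. \<forall>z\<in>Y. TY y = z \<longleftrightarrow> z \<in> rel_app C y) \<and>
                 rel_flat C \<inter> Y = {0} \<and> rel_sharp C = set_plus (rel_flat C) Y)
           \<longrightarrow> (\<exists>(scX :: 'r \<Rightarrow> 'm \<Rightarrow> 'm) X TX \<rho>.
              is_reduction scale C scX X TX \<rho> \<and> meets_in_radical C scX X \<rho>))"
proof (intro conjI impI)
  note ss = assms(1) and m = assms(2)
  have C00: "(0, 0) \<in> C" using assms(3) unfolding linear_relation_def by blast
  have Cadd: "\<And>a b c d. (a, b) \<in> C \<Longrightarrow> (c, d) \<in> C \<Longrightarrow> (a + c, b + d) \<in> C"
    using assms(3) unfolding linear_relation_def by force
  have Csc: "\<And>k a b. (a, b) \<in> C \<Longrightarrow> (scale k a, scale k b) \<in> C"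
    using assms(3) unfolding linear_relation_def by force
  have neg: "- x = scale (-1) x" for x using module.scale_minus_left[OF m, of 1 x] module.scale_one[OF m] by simp
  have Cdiff: "(0, b - c) \<in> C" if "(a, b) \<in> C" "(a, c) \<in> C" for a b c
  proof -
    have "(a + scale (-1) a, b + scale (-1) c) \<in> C" using Cadd[OF that(1) Csc[OF that(2), of "-1"]] .
    then show ?thesis by (simp add: neg[symmetric])
  qed
  have flat0: "0 \<in> rel_flat C" using zero_flat[OF C00] .
  {
    assume "\<exists>(scX :: 'r \<Rightarrow> 'x::ab_group_add \<Rightarrow> 'x) X TX \<rho>.
              is_reduction scale C scX X TX \<rho> \<and> meets_in_radical C scX X \<rho>"
    then obtain scX :: "'r \<Rightarrow> 'x \<Rightarrow> 'x" and X TX \<rho> where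
      red: "is_reduction scale C scX X TX \<rho>" and mr: "meets_in_radical C scX X \<rho>" by blast
    have mo: "module_on scX X" and lT: "laurent_structure_on scX X TX" and lr: "linear_on scX scale X \<rho>"
      and sh: "rel_sharp C = set_plus (rel_flat C) (\<rho> ` X)"
      and Trel: "\<And>x. x \<in> X \<Longrightarrow> \<rho> (TX x) \<in> rel_app C (\<rho> x)"
      using red unfolding is_reduction_def by auto
    have radX: "\<And>x. x \<in> X \<Longrightarrow> \<rho> x \<in> rel_flat C \<Longrightarrow> x = 0"
      using mr rad_eq_zero[OF mo ss] unfolding meets_in_radical_def by blast
    have TXlin: "\<And>x y. x \<in> X \<Longrightarrow> y \<in> X \<Longrightarrow> TX (x + y) = TX x + TX y"
      "\<And>c x. x \<in> X \<Longrightarrow> TX (scX c x) = scX c (TX x)" and TXbij: "bij_betw TX X X"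
      using lT unfolding laurent_structure_on_def linear_on_def by auto
    have radd: "\<And>x y. x \<in> X \<Longrightarrow> y \<in> X \<Longrightarrow> \<rho> (x + y) = \<rho> x + \<rho> y"
      and rsc: "\<And>c x. x \<in> X \<Longrightarrow> \<rho> (scX c x) = scale c (\<rho> x)"
      using lr unfolding linear_on_def by auto
    have r0: "\<rho> 0 = 0"
      using rsc[OF mo_zero[OF mo], of 0] mo_sc0[OF mo mo_zero[OF mo]] module.scale_zero_left[OF m] by simp
    have rneg: "\<rho> (- x) = - \<rho> x" if "x \<in> X" for x
      using rsc[OF that, of "-1"] mo_lneg[OF mo that, of 1] mo_one[OF mo that] neg by simp
    have rdiff: "\<rho> (x - y) = \<rho> x - \<rho> y" if "x \<in> X" "y \<in> X" for x y
      using radd[OF that(1) mo_neg[OF mo that(2)]] rneg[OF that(2)] by simp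
    have inj: "inj_on \<rho> X"
    proof (rule inj_onI)
      fix x y assume xy: "x \<in> X" "y \<in> X" "\<rho> x = \<rho> y"
      then have "\<rho> (x - y) = 0" using rdiff by simp
      then have "x - y = 0" using radX[OF mo_diff[OF mo xy(1) xy(2)]] flat0 by simp
      then show "x = y" by simp
    qed
    define Y where "Y = \<rho> ` X"
    define TY where "TY = \<rho> \<circ> TX \<circ> inv_into X \<rho>"
    have TYr: "TY (\<rho> x) = \<rho> (TX x)" if "x \<in> X" for x
      unfolding TY_def using inv_into_f_f[OF inj that] by simp
    have TXX: "x \<in> X \<Longrightarrow> TX x \<in> X" for x using TXbij unfolding bij_betw_def by blast
    have "module.subspace scale Y" unfolding module.subspace_def[OF m] Y_def
    proof (intro conjI ballI allI)
      show "0 \<in> \<rho> ` X" using r0 mo_zero[OF mo] by force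
      show "a + b \<in> \<rho> ` X" if ab: "a \<in> \<rho> ` X" "b \<in> \<rho> ` X" for a b
      proof -
        obtain x y where h: "x \<in> X" "y \<in> X" "a = \<rho> x" "b = \<rho> y" using ab by blast
        then have "a + b = \<rho> (x + y)" using radd by simp
        then show ?thesis using mo_add[OF mo h(1) h(2)] by blast
      qed
      show "scale c a \<in> \<rho> ` X" if ab: "a \<in> \<rho> ` X" for c a
      proof -
        obtain x where h: "x \<in> X" "a = \<rho> x" using ab by blast
        then have "scale c a = \<rho> (scX c x)" using rsc by simp
        then show ?thesis using mo_sc[OF mo h(1)] by blast
      qed
    qed
    moreover have "laurent_structure_on scale Y TY"
      unfolding laurent_structure_on_def linear_on_def
    proof (intro conjI ballI allI)
      show "TY (a + b) = TY a + TY b" if ab: "a \<in> Y" "b \<in> Y" for a b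
      proof -
        obtain x y where h: "x \<in> X" "y \<in> X" "a = \<rho> x" "b = \<rho> y" using ab unfolding Y_def by blast
        have "TY (a + b) = TY (\<rho> (x + y))" using radd h by simp
        also have "\<dots> = \<rho> (TX (x + y))" using TYr mo_add[OF mo h(1) h(2)] by blast
        also have "\<dots> = \<rho> (TX x + TX y)" using TXlin(1) h by simp
        also have "\<dots> = \<rho> (TX x) + \<rho> (TX y)" using radd TXX h by simp
        also have "\<dots> = TY a + TY b" using TYr h by simp
        finally show ?thesis .
      qed
      show "TY (scale c a) = scale c (TY a)" if ab: "a \<in> Y" for c a
      proof -
        obtain x where h: "x \<in> X" "a = \<rho> x" using ab unfolding Y_def by blast
        have "TY (scale c a) = TY (\<rho> (scX c x))" using rsc h by simp
        also have "\<dots> = \<rho> (TX (scX c x))" using TYr mo_sc[OF mo h(1)] by blast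
        also have "\<dots> = \<rho> (scX c (TX x))" using TXlin(2) h by simp
        also have "\<dots> = scale c (\<rho> (TX x))" using rsc TXX h by simp
        also have "\<dots> = scale c (TY a)" using TYr h by simp
        finally show ?thesis .
      qed
      have b1: "bij_betw \<rho> X Y" unfolding Y_def using inj by (rule inj_on_imp_bij_betw)
      have "bij_betw (inv_into X \<rho>) Y X" using bij_betw_inv_into[OF b1] .
      then have "bij_betw (TX \<circ> inv_into X \<rho>) Y X" using TXbij by (rule bij_betw_trans)
      then have "bij_betw (\<rho> \<circ> (TX \<circ> inv_into X \<rho>)) Y Y" using b1 by (rule bij_betw_trans)
      then show "bij_betw TY Y Y" unfolding TY_def by (simp add: comp_assoc)
    qed
    moreover have "\<forall>y\<in>Y. \<forall>z\<in>Y. TY y = z \<longleftrightarrow> z \<in> rel_app C y"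
    proof (intro ballI iffI)
      fix y z assume h: "y \<in> Y" "z \<in> Y" "TY y = z"
      then obtain x where x: "x \<in> X" "y = \<rho> x" unfolding Y_def by blast
      then have "z = \<rho> (TX x)" using TYr h(3) by simp
      then show "z \<in> rel_app C y" using Trel x by simp
    next
      fix y z assume yz: "y \<in> Y" "z \<in> Y" "z \<in> rel_app C y"
      then obtain x x' where xx: "x \<in> X" "x' \<in> X" "y = \<rho> x" "z = \<rho> x'" unfolding Y_def by blast
      have c1: "(\<rho> x, \<rho> (TX x)) \<in> C" using Trel[OF xx(1)] unfolding rel_app_def by simp
      have c2: "(\<rho> x, \<rho> x') \<in> C" using yz(3) xx unfolding rel_app_def by simp
      have d: "(0, \<rho> (TX x - x')) \<in> C" using Cdiff[OF c1 c2] rdiff[OF TXX[OF xx(1)] xx(2)] by simp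
      have dX: "TX x - x' \<in> X" using mo_diff[OF mo TXX[OF xx(1)] xx(2)] .
      have "\<rho> (TX x - x') \<in> rel_sharp C" unfolding sh set_plus_def using flat0 dX by force
      then have "\<rho> (TX x - x') \<in> rel_dd C" unfolding rel_sharp_def by blast
      then have "\<rho> (TX x - x') \<in> rel_flat C" using C0_flat[OF C00 d] by blast
      then have "TX x - x' = 0" using radX dX by blast
      then show "TY y = z" using TYr xx by simp
    qed
    moreover have "rel_flat C \<inter> Y = {0}"
    proof
      show "rel_flat C \<inter> Y \<subseteq> {0}" unfolding Y_def using radX r0 by blast
      show "{0} \<subseteq> rel_flat C \<inter> Y" unfolding Y_def using flat0 r0 mo_zero[OF mo] by force
    qed
    moreover have "rel_sharp C = set_plus (rel_flat C) Y" unfolding Y_def by (rule sh)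
    ultimately show "\<exists>Y TY. module.subspace scale Y \<and> laurent_structure_on scale Y TY \<and>
                 (\<forall>y\<in>Y. \<forall>z\<in>Y. TY y = z \<longleftrightarrow> z \<in> rel_app C y) \<and>
                 rel_flat C \<inter> Y = {0} \<and> rel_sharp C = set_plus (rel_flat C) Y"
      by (intro exI[of _ Y] exI[of _ TY] conjI)
  }
  {
    assume "\<exists>Y TY. module.subspace scale Y \<and> laurent_structure_on scale Y TY \<and>
                 (\<forall>y\<in>Y. \<forall>z\<in>Y. TY y = z \<longleftrightarrow> z \<in> rel_app C y) \<and>
                 rel_flat C \<inter> Y = {0} \<and> rel_sharp C = set_plus (rel_flat C) Y"
    then obtain Y TY where Ys: "module.subspace scale Y" and lT: "laurent_structure_on scale Y TY"
      and rel: "\<forall>y\<in>Y. \<forall>z\<in>Y. TY y = z \<longleftrightarrow> z \<in> rel_app C y"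
      and fl: "rel_flat C \<inter> Y = {0}" and sh: "rel_sharp C = set_plus (rel_flat C) Y" by blast
    have mo: "module_on scale Y" using module_on_sub[OF m Ys] .
    have TYY: "y \<in> Y \<Longrightarrow> TY y \<in> Y" for y using lT unfolding laurent_structure_on_def bij_betw_def by blast
    have R1: "is_reduction scale C scale Y TY id"
      unfolding is_reduction_def
    proof (intro conjI ballI)
      show "module_on scale Y" by (rule mo)
      show "laurent_structure_on scale Y TY" by (rule lT)
      show "linear_on scale scale Y id" unfolding linear_on_def by simp
      show "rel_sharp C = set_plus (rel_flat C) (id ` Y)" using sh by simp
      show "id (TY x) \<in> rel_app C (id x)" if "x \<in> Y" for x using rel TYY[OF that] that by (simp only: id_apply) blast
    qed
    have "{x \<in> Y. id x \<in> rel_flat C} = rel_flat C \<inter> Y" by auto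
    then have R2: "meets_in_radical C scale Y id"
      unfolding meets_in_radical_def rad_eq_zero[OF mo ss] using fl by simp
    show "\<exists>(scX :: 'r \<Rightarrow> 'm \<Rightarrow> 'm) X TX \<rho>.
              is_reduction scale C scX X TX \<rho> \<and> meets_in_radical C scX X \<rho>"
      apply (rule exI[of _ scale], rule exI[of _ Y], rule exI[of _ TY], rule exI[of _ id])
      using R1 R2 by (rule conjI)
  }
qed

end
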